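(* A $C^1$-diffeomorphism $\mathbf f:\mathcal Z\to\mathcal X$ ($\mathcal Z=\mathbb R^{d_z}$, $\mathcal X=\mathbf f(\mathcal Z)\subseteq\mathbb R^{d_x}$) is compositional and irreducible if and only if $\mathbf f$ has at most $0$-th order interaction across slots and satisfies interaction asymmetry of order $0$ for all equivalent generators.
   Context: Fix a partition $\{B_1,\dots,B_K\}$ of $[d_z]$ into nonempty slots; $\mathbf z_S=(z_i)_{i\in S}$; $\odot$ is entrywise product. For $S\subseteq[d_z]$, $I_S(\mathbf z):=\{l\in[d_x]: (D_i f_l(\mathbf z))_{i\in S}\ne\mathbf 0\}$; write $I_k:=I_{B_k}$. For $T\subseteq[d_x]$, $D\mathbf f_T(\mathbf z)$ is the $|T|\times d_z$ Jacobian of $(f_l)_{l\in T}$. Compositionality: for all $\mathbf z$ and all $k\ne j$, $I_k(\mathbf z)\cap I_j(\mathbf z)=\emptyset$. Irreducibility: for all $\mathbf z$, $k\in[K]$ and every partition $I_k(\mathbf z)=S_1\cup S_2$ into disjoint nonempty sets, $\mathrm{rank}(D\mathbf f_{S_1}(\mathbf z))+\mathrm{rank}(D\mathbf f_{S_2}(\mathbf z))>\mathrm{rank}(D\mathbf f_{I_k(\mathbf z)}(\mathbf z))$. At most $0$-th order interaction between $\mathbf z_A,\mathbf z_B$ (nonempty $A,B\subseteq[d_z]$): $D_i\mathbf f(\mathbf z)\odot D_j\mathbf f(\mathbf z)=\mathbf 0$ for all $\mathbf z$, $i\in A$, $j\in B$; if this fails at some $\mathbf z$ (for some $i\in A,j\in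 B$), $\mathbf z_A,\mathbf z_B$ have first-order interaction at $\mathbf z$. $\mathbf f$ has at most $0$-th order interaction across slots if all pairs of distinct slots do. Interaction asymmetry of order $0$: (i) $\mathbf f$ has at most $0$-th order interaction across slots; (ii) for every $\mathbf z$, every $k$, and all nonempty $A,B$ with $A\cup B=B_k$, $\mathbf z_A,\mathbf z_B$ have first-order interaction within $\mathbf f$ at $\mathbf z$. Equivalent generator: $\bar{\mathbf f}:\mathbb R^{d_z}\to\mathbb R^{d_x}$ with $\bar{\mathbf f}(\mathbf M_1\mathbf z_{B_1},\dots,\mathbf M_K\mathbf z_{B_K})=\mathbf f(\mathbf z)$ for all $\mathbf z$, for some invertible $\mathbf M_k\in\mathbb R^{|B_k|\times|B_k|}$; "for all equivalent generators" means every such $\bar{\mathbf f}$ satisfies the property. *)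

theory Defs
  imports "HOL-Analysis.Analysis" "HOL-Library.Disjoint_Sets"
begin

text \<open>Generators f : R^{d_z} -> R^{d_x} with d_z = CARD('n), d_x = CARD('m).
  Slots: a partition B of the latent index set UNIV :: 'n set (partition_on).\<close>

definition jac :: "(real^'n \<Rightarrow> real^'m) \<Rightarrow> real^'n \<Rightarrow> real^'n^'m" where
  "jac f z = matrix (frechet_derivative f (at z))"
  \<comment> \<open>jac f z $ l $ i = D_i f_l(z)\<close>

definition C1_diffeo :: "(real^'n \<Rightarrow> real^'m) \<Rightarrow> bool" where
  "C1_diffeo f \<longleftrightarrow>
     (\<forall>z. f differentiable (at z)) \<and> continuous_on UNIV (jac f) \<and>
     (\<forall>z. inj ((*v) (jac f z))) \<and>
     inj f \<and> continuous_on (range f) (inv f)"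

definition Iset :: "(real^'n \<Rightarrow> real^'m) \<Rightarrow> real^'n \<Rightarrow> 'n set \<Rightarrow> 'm set" where
  "Iset f z S = {l. \<exists>i\<in>S. jac f z $ l $ i \<noteq> 0}"

text \<open>Rank of the |T| x d_z Jacobian of (f_l)_{l in T}: rows outside T are replaced by 0,
  which does not change the rank.\<close>
definition rank_rows :: "(real^'n \<Rightarrow> real^'m) \<Rightarrow> real^'n \<Rightarrow> 'm set \<Rightarrow> nat" where
  "rank_rows f z T = rank (\<chi> l. if l \<in> T then row l (jac f z) else 0)"

definition compositional :: "(real^'n \<Rightarrow> real^'m) \<Rightarrow> 'n set set \<Rightarrow> bool" where
  "compositional f B \<longleftrightarrow>
     (\<forall>z. \<forall>Bk\<in>B. \<forall>Bj\<in>B. Bk \<noteq> Bj \<longrightarrow> Iset f z Bk \<inter> Iset f z Bj = {})"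

definition irreducible_gen :: "(real^'n \<Rightarrow> real^'m) \<Rightarrow> 'n set set \<Rightarrow> bool" where
  "irreducible_gen f B \<longleftrightarrow>
     (\<forall>z. \<forall>Bk\<in>B. \<forall>S1 S2. S1 \<noteq> {} \<and> S2 \<noteq> {} \<and> S1 \<inter> S2 = {} \<and> S1 \<union> S2 = Iset f z Bk \<longrightarrow>
        rank_rows f z S1 + rank_rows f z S2 > rank_rows f z (Iset f z Bk))"

definition at_most_0_interaction :: "(real^'n \<Rightarrow> real^'m) \<Rightarrow> 'n set \<Rightarrow> 'n set \<Rightarrow> bool" where
  "at_most_0_interaction f A C \<longleftrightarrow>
     (\<forall>z. \<forall>i\<in>A. \<forall>j\<in>C. \<forall>l. jac f z $ l $ i * jac f z $ l $ j = 0)"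

definition first_order_interaction_at ::
    "(real^'n \<Rightarrow> real^'m) \<Rightarrow> 'n set \<Rightarrow> 'n set \<Rightarrow> real^'n \<Rightarrow> bool" where
  "first_order_interaction_at f A C z \<longleftrightarrow>
     (\<exists>i\<in>A. \<exists>j\<in>C. \<exists>l. jac f z $ l $ i * jac f z $ l $ j \<noteq> 0)"

definition at_most_0_across_slots :: "(real^'n \<Rightarrow> real^'m) \<Rightarrow> 'n set set \<Rightarrow> bool" where
  "at_most_0_across_slots f B \<longleftrightarrow>
     (\<forall>Bk\<in>B. \<forall>Bj\<in>B. Bk \<noteq> Bj \<longrightarrow> at_most_0_interaction f Bk Bj)"

definition interaction_asymmetry_0 :: "(real^'n \<Rightarrow> real^'m) \<Rightarrow> 'n set set \<Rightarrow> bool" where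
  "interaction_asymmetry_0 f B \<longleftrightarrow>
     at_most_0_across_slots f B \<and>
     (\<forall>z. \<forall>Bk\<in>B. \<forall>A C. A \<noteq> {} \<and> C \<noteq> {} \<and> A \<union> C = Bk \<longrightarrow>
        first_order_interaction_at f A C z)"

text \<open>Block-diagonal invertible matrix w.r.t. the slot partition
  (i.e. diag(M_1,...,M_K) with all M_k invertible).\<close>
definition block_diag_invertible :: "'n set set \<Rightarrow> real^'n^'n \<Rightarrow> bool" where
  "block_diag_invertible B M \<longleftrightarrow>
     invertible M \<and> (\<forall>i j. \<not> (\<exists>Bk\<in>B. i \<in> Bk \<and> j \<in> Bk) \<longrightarrow> M $ i $ j = 0)"

definition equivalent_generator ::
    "'n set set \<Rightarrow> (real^'n \<Rightarrow> real^'m) \<Rightarrow> (real^'n \<Rightarrow> real^'m) \<Rightarrow> bool" where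
  "equivalent_generator B f fbar \<longleftrightarrow>
     (\<exists>M. block_diag_invertible B M \<and> (\<forall>z. fbar (M *v z) = f z))"

end

theory Submission
  imports Defs
begin

lemma jac_comp:
  fixes f :: "real^'n \<Rightarrow> real^'m" and N :: "real^'n^'n"
  assumes "\<forall>z. f differentiable (at z)"
  shows "jac (\<lambda>x. f (N *v x)) w = jac f (N *v w) ** N"
proof -
  let ?f' = "frechet_derivative f (at (N *v w))"
  have d: "(f has_derivative ?f') (at (N *v w))" using assms frechet_derivative_works by blast
  have l: "((*v) N has_derivative (*v) N) (at w)"
    by (rule bounded_linear_imp_has_derivative[OF matrix_vector_mul_bounded_linear])
  have c: "((f \<circ> (*v) N) has_derivative (?f' \<circ> (*v) N)) (at w)" using diff_chain_at[OF l d] .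
  have fe: "(f \<circ> (*v) N) = (\<lambda>x. f (N *v x))" by (rule ext) simp
  have e: "?f' \<circ> (*v) N = frechet_derivative (\<lambda>x. f (N *v x)) (at w)"
    using frechet_derivative_at[OF c] unfolding fe .
  have lin: "linear ?f'" using d by (rule has_derivative_linear)
  have lin2: "linear ((*v) N)" by simp
  have "matrix (?f' \<circ> (*v) N) = matrix ?f' ** matrix ((*v) N)"
    by (rule matrix_compose[OF lin2 lin])
  then show ?thesis unfolding jac_def e[symmetric] by simp
qed

lemma row_mult: "(X ** (N::real^'k^'n)) $ l = (X::real^'n^'m) $ l v* N"
  by (simp add: vec_eq_iff matrix_matrix_mult_def vector_matrix_mult_def)

lemma col_nonzero:
  fixes X :: "real^'n^'m"
  assumes "inj ((*v) X)"
  shows "\<exists>l. X$l$i \<noteq> 0"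
proof (rule ccontr)
  assume "\<not> ?thesis"
  hence "X *v axis i 1 = X *v 0"
    by (simp add: matrix_vector_mult_basis column_def vec_eq_iff)
  hence "axis i (1::real) = 0" using assms by (meson injD)
  thus False by (simp add: axis_eq_0_iff)
qed

lemma rank_rows_dim: "rank_rows f z T = dim {jac f z $ l | l. l \<in> T}"
proof -
  let ?R = "(\<chi> l. if l \<in> T then row l (jac f z) else 0) :: real^'a^'b"
  let ?S = "{jac f z $ l | l. l \<in> T}"
  have r: "row l ?R = (if l \<in> T then jac f z $ l else 0)" for l
    unfolding row_def by (simp add: vec_eq_iff)
  have 1: "rows ?R \<subseteq> insert 0 ?S" unfolding rows_def r by auto
  have 2: "?S \<subseteq> rows ?R"
  proof
    fix x assume "x \<in> ?S"
    then obtain l where "l \<in> T" "x = jac f z $ l" by blast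
    hence "x = row l ?R" using r by simp
    thus "x \<in> rows ?R" unfolding rows_def by blast
  qed
  have s0: "span (insert 0 ?S) = span ?S" by (rule span_insert_0)
  have "span (rows ?R) \<subseteq> span ?S" using span_mono[OF 1] unfolding s0 .
  moreover have "span ?S \<subseteq> span (rows ?R)" using span_mono[OF 2] .
  ultimately have eq: "span (rows ?R) = span ?S" by (rule subset_antisym)
  have "dim (rows ?R) = dim (span (rows ?R))" by (simp only: dim_span)
  also have "\<dots> = dim (span ?S)" by (simp only: eq)
  also have "\<dots> = dim ?S" by (simp only: dim_span)
  finally have "dim (rows ?R) = dim ?S" .
  thus ?thesis unfolding rank_rows_def row_rank_def .
qed

lemma in_span_axis:
  fixes x :: "real^'n"
  assumes "\<forall>j. j \<notin> S \<longrightarrow> x$j = 0"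
  shows "x \<in> span ((\<lambda>k. axis k 1) ` S)"
proof -
  have "x = (\<Sum>i\<in>UNIV. x$i *\<^sub>R axis i 1)"
    using basis_expansion[of x] by (simp add: scalar_mult_eq_scaleR)
  also have "\<dots> = (\<Sum>i\<in>S. x$i *\<^sub>R axis i 1)"
    using assms by (intro sum.mono_neutral_right) auto
  also have "\<dots> \<in> span ((\<lambda>k. axis k 1) ` S)"
    by (intro span_sum span_mul span_base) auto
  finally show ?thesis .
qed

lemma vmult_linear: "linear (\<lambda>x. x v* (N::real^'k^'n))"
proof -
  have "(\<lambda>x. x v* N) = (\<lambda>x. transpose N *v x)" by simp
  thus ?thesis by (metis matrix_vector_mul_linear)
qed

definition Rw :: "real^'n^'m \<Rightarrow> 'm set \<Rightarrow> (real^'n) set" where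
  "Rw X S = {X $ l | l. l \<in> S}"

lemma Rw_mult: "Rw (X ** N) S = (\<lambda>x. x v* N) ` Rw X S"
  unfolding Rw_def row_mult by blast

lemma dim_Rw_mult:
  fixes N :: "real^'n^'n" and X :: "real^'n^'m"
  assumes "invertible N"
  shows "dim (Rw (X ** N) S) = dim (Rw X S)"
proof -
  obtain N' where NN: "N ** N' = mat 1" using assms unfolding invertible_def by blast
  have inj: "inj (\<lambda>x. x v* N)"
  proof (rule injI)
    fix x y assume "x v* N = y v* N"
    hence "(x v* N) v* N' = (y v* N) v* N'" by simp
    thus "x = y" by (simp add: vector_matrix_mul_assoc NN)
  qed
  show ?thesis unfolding Rw_mult
    by (rule dim_image_eq[OF vmult_linear]) (use inj in \<open>auto simp: inj_on_def inj_def\<close>)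
qed

lemma mat1_row: "(mat 1 :: real^'n^'n) $ m = axis m 1"
  by (simp add: vec_eq_iff mat_def axis_def)

lemma comp_iff: "compositional f B \<longleftrightarrow> at_most_0_across_slots f B"
proof
  assume c: "compositional f B"
  show "at_most_0_across_slots f B"
    unfolding at_most_0_across_slots_def at_most_0_interaction_def
  proof (intro ballI impI allI)
    fix Bk Bj z i j l
    assume h: "Bk \<in> B" "Bj \<in> B" "Bk \<noteq> Bj" "i \<in> Bk" "j \<in> Bj"
    show "jac f z $ l $ i * jac f z $ l $ j = 0"
    proof (rule ccontr)
      assume "jac f z $ l $ i * jac f z $ l $ j \<noteq> 0"
      hence "jac f z $ l $ i \<noteq> 0" "jac f z $ l $ j \<noteq> 0" by auto
      hence "l \<in> Iset f z Bk \<inter> Iset f z Bj" unfolding Iset_def using h by blast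
      moreover have "Iset f z Bk \<inter> Iset f z Bj = {}" using c h unfolding compositional_def by blast
      ultimately show False by blast
    qed
  qed
next
  assume a: "at_most_0_across_slots f B"
  show "compositional f B" unfolding compositional_def
  proof (intro allI ballI impI)
    fix z Bk Bj assume h: "Bk \<in> B" "Bj \<in> B" "Bk \<noteq> Bj"
    show "Iset f z Bk \<inter> Iset f z Bj = {}"
    proof (rule ccontr)
      assume "Iset f z Bk \<inter> Iset f z Bj \<noteq> {}"
      then obtain l i j where l: "i \<in> Bk" "jac f z $ l $ i \<noteq> 0" "j \<in> Bj" "jac f z $ l $ j \<noteq> 0"
        unfolding Iset_def by blast
      have "jac f z $ l $ i * jac f z $ l $ j = 0"
        using a h l(1,3) unfolding at_most_0_across_slots_def at_most_0_interaction_def by blast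
      with l show False by simp
    qed
  qed
qed

lemma bd_inv:
  fixes M N :: "real^'n^'n"
  assumes Mbd: "\<forall>i j. (i \<in> K) \<noteq> (j \<in> K) \<longrightarrow> M$i$j = 0"
    and MN: "M ** N = mat 1" and NM: "N ** M = mat 1"
  shows "\<forall>i j. (i \<in> K) \<noteq> (j \<in> K) \<longrightarrow> N$i$j = 0"
proof -
  define P :: "real^'n^'n" where "P = (\<chi> i j. if i = j \<and> i \<in> K then 1 else 0)"
  have R: "(X ** P) $ i $ j = (if j \<in> K then X$i$j else 0)" for X :: "real^'n^'n" and i j
  proof -
    have "(X ** P) $ i $ j = (\<Sum>m\<in>UNIV. X$i$m * P$m$j)" by (simp add: matrix_matrix_mult_def)
    also have "\<dots> = (\<Sum>m\<in>UNIV. if m = j then (if j \<in> K then X$i$j else 0) else 0)"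
      by (rule sum.cong) (auto simp: P_def)
    also have "\<dots> = (if j \<in> K then X$i$j else 0)" by simp
    finally show ?thesis .
  qed
  have L: "(P ** X) $ i $ j = (if i \<in> K then X$i$j else 0)" for X :: "real^'n^'n" and i j
  proof -
    have "(P ** X) $ i $ j = (\<Sum>m\<in>UNIV. P$i$m * X$m$j)" by (simp add: matrix_matrix_mult_def)
    also have "\<dots> = (\<Sum>m\<in>UNIV. if m = i then (if i \<in> K then X$i$j else 0) else 0)"
      by (rule sum.cong) (auto simp: P_def)
    also have "\<dots> = (if i \<in> K then X$i$j else 0)" by simp
    finally show ?thesis .
  qed
  have MP: "M ** P = P ** M"
  proof -
    have "(M ** P) $ i $ j = (P ** M) $ i $ j" for i j
      unfolding R L using Mbd by auto
    thus ?thesis by (simp add: vec_eq_iff)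
  qed
  have "N ** P = N ** P ** (M ** N)" by (simp add: MN)
  also have "\<dots> = N ** (P ** M) ** N" by (simp add: matrix_mul_assoc)
  also have "\<dots> = N ** (M ** P) ** N" by (simp add: MP)
  also have "\<dots> = (N ** M) ** P ** N" by (simp add: matrix_mul_assoc)
  also have "\<dots> = P ** N" by (simp add: NM)
  finally have NP: "N ** P = P ** N" .
  show ?thesis
  proof (intro allI impI)
    fix i j assume h: "(i \<in> K) \<noteq> (j \<in> K)"
    have "(N ** P) $ i $ j = (P ** N) $ i $ j" by (simp add: NP)
    thus "N $ i $ j = 0" unfolding R L using h by (auto split: if_splits)
  qed
qed

lemma prod_zero_out:
  fixes J :: "real^'n^'m" and N :: "real^'n^'n"
  assumes Nbd: "\<forall>i j. (i \<in> K) \<noteq> (j \<in> K) \<longrightarrow> N$i$j = 0"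
    and "\<forall>m\<in>K. J$l$m = 0" and "i \<in> K"
  shows "(J ** N)$l$i = 0"
proof -
  have "(J ** N)$l$i = (\<Sum>m\<in>UNIV. J$l$m * N$m$i)" by (simp add: matrix_matrix_mult_def)
  also have "\<dots> = 0"
  proof (rule sum.neutral, rule ballI)
    fix m show "J$l$m * N$m$i = 0"
      using assms by (cases "m \<in> K") auto
  qed
  finally show ?thesis .
qed

lemma prod_zero_in:
  fixes J :: "real^'n^'m" and N :: "real^'n^'n"
  assumes Nbd: "\<forall>i j. (i \<in> K) \<noteq> (j \<in> K) \<longrightarrow> N$i$j = 0"
    and "\<forall>m. m \<notin> K \<longrightarrow> J$l$m = 0" and "i \<notin> K"
  shows "(J ** N)$l$i = 0"
proof -
  have "(J ** N)$l$i = (\<Sum>m\<in>UNIV. J$l$m * N$m$i)" by (simp add: matrix_matrix_mult_def)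
  also have "\<dots> = 0"
  proof (rule sum.neutral, rule ballI)
    fix m show "J$l$m * N$m$i = 0"
      using assms by (cases "m \<in> K") auto
  qed
  finally show ?thesis .
qed

lemma dirA:
  fixes J :: "real^'n^'m" and N :: "real^'n^'n"
  assumes injJ: "inj ((*v) J)" and invN: "invertible N"
    and Nbd: "\<forall>i j. (i \<in> K) \<noteq> (j \<in> K) \<longrightarrow> N$i$j = 0"
    and rows: "\<forall>l j. (\<exists>i\<in>K. J$l$i \<noteq> 0) \<and> j \<notin> K \<longrightarrow> J$l$j = 0"
    and irr: "\<forall>S1 S2. S1 \<noteq> {} \<and> S2 \<noteq> {} \<and> S1 \<inter> S2 = {} \<and> S1 \<union> S2 = {l. \<exists>i\<in>K. J$l$i \<noteq> 0} \<longrightarrow>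
                dim (Rw J S1) + dim (Rw J S2) > dim (Rw J {l. \<exists>i\<in>K. J$l$i \<noteq> 0})"
    and neA: "A \<noteq> {}" and neC: "C \<noteq> {}" and AC: "A \<union> C = K"
  shows "\<exists>i\<in>A. \<exists>j\<in>C. \<exists>l. (J ** N)$l$i * (J ** N)$l$j \<noteq> 0"
proof (rule ccontr)
  define J' where "J' = J ** N"
  define I where "I = {l. \<exists>i\<in>K. J$l$i \<noteq> 0}"
  assume H0: "\<not> ?thesis"
  have H: "J'$l$i = 0 \<or> J'$l$j = 0" if "i \<in> A" "j \<in> C" for i j l
    using H0 that unfolding J'_def by auto
  have injJ': "inj ((*v) J')"
  proof (rule injI)
    fix x y assume "J' *v x = J' *v y"
    hence "J *v (N *v x) = J *v (N *v y)" unfolding J'_def by (simp add: matrix_vector_mul_assoc)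
    hence "N *v x = N *v y" using injJ by (meson injD)
    thus "x = y" using inj_matrix_vector_mult[OF invN] by (meson injD)
  qed
  have out: "J'$l$i = 0" if "l \<notin> I" "i \<in> K" for l i
    unfolding J'_def
  proof (rule prod_zero_out[OF Nbd _ that(2)])
    show "\<forall>m\<in>K. J $ l $ m = 0" using that(1) unfolding I_def by blast
  qed
  have inn: "J'$l$j = 0" if "l \<in> I" "j \<notin> K" for l j
    unfolding J'_def
  proof (rule prod_zero_in[OF Nbd _ that(2)])
    show "\<forall>m. m \<notin> K \<longrightarrow> J $ l $ m = 0" using that(1) rows unfolding I_def by blast
  qed
  have disj: "A \<inter> C = {}"
  proof (rule ccontr)
    assume "A \<inter> C \<noteq> {}" then obtain i where i: "i \<in> A" "i \<in> C" by blast
    obtain l where "J'$l$i \<noteq> 0" using col_nonzero[OF injJ'] by blast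
    with H[OF i, of l] show False by simp
  qed
  define S1 where "S1 = {l \<in> I. \<exists>i\<in>A. J'$l$i \<noteq> 0}"
  define S2 where "S2 = I - S1"
  have ne1: "S1 \<noteq> {}"
  proof -
    obtain i where i: "i \<in> A" using neA by blast
    hence iK: "i \<in> K" using AC by blast
    obtain l where l: "J'$l$i \<noteq> 0" using col_nonzero[OF injJ'] by blast
    have "l \<in> I" using out[OF _ iK] l by blast
    thus ?thesis using i l unfolding S1_def by blast
  qed
  have ne2: "S2 \<noteq> {}"
  proof -
    obtain j where j: "j \<in> C" using neC by blast
    hence jK: "j \<in> K" using AC by blast
    obtain l where l: "J'$l$j \<noteq> 0" using col_nonzero[OF injJ'] by blast
    have lI: "l \<in> I" using out[OF _ jK] l by blast
    have "l \<notin> S1"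
    proof
      assume "l \<in> S1"
      then obtain i where "i \<in> A" "J'$l$i \<noteq> 0" unfolding S1_def by blast
      with H[OF _ j, of i l] l show False by auto
    qed
    thus ?thesis using lI unfolding S2_def by blast
  qed
  have d12: "S1 \<inter> S2 = {}" and u12: "S1 \<union> S2 = I" unfolding S2_def S1_def by auto
  have gt: "dim (Rw J S1) + dim (Rw J S2) > dim (Rw J I)"
    using irr ne1 ne2 d12 u12 unfolding I_def by blast
  have dm: "dim (Rw J' S) = dim (Rw J S)" for S unfolding J'_def by (rule dim_Rw_mult[OF invN])
  define Z1 where "Z1 = {x::real^'n. \<forall>j. j \<notin> A \<longrightarrow> x$j = 0}"
  define Z2 where "Z2 = {x::real^'n. \<forall>j\<in>A. x$j = 0}"
  have sZ1: "subspace Z1" unfolding subspace_def Z1_def by auto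
  have sZ2: "subspace Z2" unfolding subspace_def Z2_def by auto
  have r1: "Rw J' S1 \<subseteq> Z1"
  proof
    fix x assume "x \<in> Rw J' S1"
    then obtain l where l: "l \<in> S1" "x = J'$l" unfolding Rw_def by blast
    then obtain i where i: "i \<in> A" "J'$l$i \<noteq> 0" and lI: "l \<in> I" unfolding S1_def by blast
    have "J'$l$j = 0" if "j \<notin> A" for j
    proof (cases "j \<in> K")
      case True
      hence "j \<in> C" using that AC by blast
      thus ?thesis using H[OF i(1), of j l] i(2) by auto
    next
      case False thus ?thesis using inn[OF lI] by blast
    qed
    thus "x \<in> Z1" unfolding Z1_def l(2) by blast
  qed
  have r2: "Rw J' S2 \<subseteq> Z2"
  proof
    fix x assume "x \<in> Rw J' S2"
    then obtain l where l: "l \<in> S2" "x = J'$l" unfolding Rw_def by blast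
    hence "l \<in> I" "l \<notin> S1" unfolding S2_def by auto
    hence "\<forall>j\<in>A. J'$l$j = 0" unfolding S1_def by blast
    thus "x \<in> Z2" unfolding Z2_def l(2) by blast
  qed
  let ?V1 = "span (Rw J' S1)" and ?V2 = "span (Rw J' S2)"
  have v1: "?V1 \<subseteq> Z1" by (rule span_minimal[OF r1 sZ1])
  have v2: "?V2 \<subseteq> Z2" by (rule span_minimal[OF r2 sZ2])
  have "?V1 \<inter> ?V2 \<subseteq> {0}"
  proof
    fix x assume "x \<in> ?V1 \<inter> ?V2"
    hence "x \<in> Z1" "x \<in> Z2" using v1 v2 by auto
    hence "x$j = 0" for j unfolding Z1_def Z2_def by (cases "j \<in> A") auto
    thus "x \<in> {0}" by (simp add: vec_eq_iff)
  qed
  hence d0: "dim (?V1 \<inter> ?V2) = 0" by simp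
  have "dim {x + y |x y. x \<in> ?V1 \<and> y \<in> ?V2} + dim (?V1 \<inter> ?V2) = dim ?V1 + dim ?V2"
    by (rule dim_sums_Int) auto
  moreover have "{x + y |x y. x \<in> ?V1 \<and> y \<in> ?V2} = span (Rw J' S1 \<union> Rw J' S2)"
    by (rule span_Un[symmetric])
  moreover have "Rw J' S1 \<union> Rw J' S2 = Rw J' I"
    unfolding Rw_def using u12 by blast
  ultimately have "dim (span (Rw J' I)) = dim ?V1 + dim ?V2" using d0 by simp
  hence "dim (Rw J' I) = dim (Rw J' S1) + dim (Rw J' S2)" by (simp only: dim_span)
  with gt show False unfolding dm by simp
qed

lemma span_vmult_zero:
  fixes N :: "real^'n^'n" and v :: "'n \<Rightarrow> real^'n"
  assumes vN: "\<And>m. v m v* N = axis m 1"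
    and x: "x \<in> span (v ` T)" and j: "j \<notin> T"
  shows "(x v* N) $ j = 0"
proof -
  define Z where "Z = {x::real^'n. \<forall>j. j \<notin> T \<longrightarrow> (x v* N)$j = 0}"
  have lin: "linear (\<lambda>x. x v* N)" by (rule vmult_linear)
  have sZ: "subspace Z" unfolding subspace_def Z_def
    using linear_0[OF lin] linear_add[OF lin] linear_scale[OF lin] by auto
  have "v ` T \<subseteq> Z" unfolding Z_def using vN by (auto simp: axis_def)
  hence "span (v ` T) \<subseteq> Z" using sZ by (rule span_minimal)
  thus ?thesis using x j unfolding Z_def by blast
qed

lemma dirB:
  fixes J :: "real^'n^'m"
  assumes injJ: "inj ((*v) J)"
    and rows: "\<forall>l j. (\<exists>i\<in>K. J$l$i \<noteq> 0) \<and> j \<notin> K \<longrightarrow> J$l$j = 0"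
    and ne1: "S1 \<noteq> {}" and ne2: "S2 \<noteq> {}" and d12: "S1 \<inter> S2 = {}"
    and u12: "S1 \<union> S2 = {l. \<exists>i\<in>K. J$l$i \<noteq> 0}"
    and le: "dim (Rw J S1) + dim (Rw J S2) \<le> dim (Rw J {l. \<exists>i\<in>K. J$l$i \<noteq> 0})"
  shows "\<exists>M A C. invertible M \<and> (\<forall>i j. M$i$j \<noteq> 0 \<longrightarrow> i = j \<or> (i \<in> K \<and> j \<in> K)) \<and>
           A \<noteq> {} \<and> C \<noteq> {} \<and> A \<union> C = K \<and>
           (\<forall>N. M ** N = mat 1 \<longrightarrow> (\<forall>i\<in>A. \<forall>j\<in>C. \<forall>l. (J ** N)$l$i * (J ** N)$l$j = 0))"
proof -
  define I where "I = {l. \<exists>i\<in>K. J$l$i \<noteq> 0}"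
  define WK where "WK = {x::real^'n. \<forall>j. j \<notin> K \<longrightarrow> x$j = 0}"
  have sWK: "subspace WK" unfolding subspace_def WK_def by auto
  have RI: "Rw J I \<subseteq> WK" unfolding Rw_def WK_def I_def using rows by blast
  have spI: "span (Rw J I) \<subseteq> WK" by (rule span_minimal[OF RI sWK])
  have WKsub: "WK \<subseteq> span (Rw J I)"
  proof
    fix x assume xW: "x \<in> WK"
    obtain y z where y: "y \<in> span (Rw J I)" and orth: "\<And>w. w \<in> span (Rw J I) \<Longrightarrow> orthogonal z w"
      and xyz: "x = y + z"
      using orthogonal_subspace_decomp_exists[of "Rw J I" x] by metis
    have "z = x - y" using xyz by simp
    hence zW: "z \<in> WK" using subspace_diff[OF sWK xW] y spI by auto
    have "(J *v z) $ l = 0" for l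
    proof (cases "l \<in> I")
      case True
      hence "J$l \<in> span (Rw J I)" unfolding Rw_def by (intro span_base) blast
      hence "inner z (J$l) = 0" using orth unfolding orthogonal_def by blast
      thus ?thesis by (simp add: matrix_mult_dot inner_commute)
    next
      case False
      have "inner (J$l) z = (\<Sum>i\<in>UNIV. J$l$i * z$i)" by (simp add: inner_vec_def)
      also have "\<dots> = 0"
      proof (rule sum.neutral, rule ballI)
        fix i show "J$l$i * z$i = 0"
          using False zW unfolding I_def WK_def by (cases "i \<in> K") auto
      qed
      finally show ?thesis by (simp add: matrix_mult_dot)
    qed
    hence "J *v z = J *v 0" by (simp add: vec_eq_iff)
    hence "z = 0" using injJ by (meson injD)
    thus "x \<in> span (Rw J I)" using xyz y by simp
  qed
  obtain b1 where b1: "b1 \<subseteq> Rw J S1" "independent b1" "Rw J S1 \<subseteq> span b1" "card b1 = dim (Rw J S1)"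
    using basis_exists by blast
  obtain b2 where b2: "b2 \<subseteq> Rw J S2" "independent b2" "Rw J S2 \<subseteq> span b2" "card b2 = dim (Rw J S2)"
    using basis_exists by blast
  have fb1: "finite b1" using b1(2) by (rule finiteI_independent)
  have fb2: "finite b2" using b2(2) by (rule finiteI_independent)
  have pos: "dim (Rw J S) > 0" if sne: "S \<noteq> {}" and sI: "S \<subseteq> I" for S
  proof (rule ccontr)
    assume "\<not> dim (Rw J S) > 0"
    hence "Rw J S \<subseteq> {0}" by simp
    obtain l where l: "l \<in> S" using sne by blast
    then obtain i where "i \<in> K" "J$l$i \<noteq> 0" using sI unfolding I_def by blast
    hence "J$l \<noteq> 0" by auto
    moreover have "J$l \<in> Rw J S" unfolding Rw_def using l by blast
    ultimately show False using \<open>Rw J S \<subseteq> {0}\<close> by blast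
  qed
  have "S1 \<subseteq> I" "S2 \<subseteq> I" using u12 unfolding I_def by blast+
  hence p1: "card b1 > 0" and p2: "card b2 > 0" using pos[OF ne1] pos[OF ne2] b1(4) b2(4) by auto
  have fK: "finite K" by simp
  have "Rw J I \<subseteq> span ((\<lambda>k. axis k 1) ` K)"
    using RI in_span_axis unfolding WK_def by blast
  hence "dim (Rw J I) \<le> card ((\<lambda>k. axis k (1::real)) ` K)" by (rule dim_le_card) simp
  also have "\<dots> \<le> card K" by (rule card_image_le[OF fK])
  finally have cK: "card b1 + card b2 \<le> card K" using le b1(4) b2(4) unfolding I_def by simp
  have "card b1 \<le> card K" using cK by simp
  then obtain A where A: "A \<subseteq> K" "card A = card b1" "finite A"
    by (rule obtain_subset_with_card_n)
  obtain \<sigma> where \<sigma>: "bij_betw \<sigma> A b1" using finite_same_card_bij[OF A(3) fb1 A(2)] by blast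
  define C where "C = K - A"
  have cC: "card C = card K - card A" unfolding C_def by (rule card_Diff_subset[OF A(3) A(1)])
  have "card b2 \<le> card C" using cC cK A(2) by simp
  then obtain C' where C': "C' \<subseteq> C" "card C' = card b2" "finite C'"
    by (rule obtain_subset_with_card_n)
  obtain \<tau> where \<tau>: "bij_betw \<tau> C' b2" using finite_same_card_bij[OF C'(3) fb2 C'(2)] by blast
  define v where "v m = (if m \<in> A then \<sigma> m else if m \<in> C' then \<tau> m else if m \<in> K then 0 else axis m 1)" for m
  define M :: "real^'n^'n" where "M = (\<chi> m. v m)"
  have Mv: "M $ m = v m" for m unfolding M_def by simp
  have AC'd: "A \<inter> C' = {}" using C'(1) unfolding C_def by blast
  have vA: "v ` A = b1"
  proof -
    have "v ` A = \<sigma> ` A" unfolding v_def by (rule image_cong) auto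
    thus ?thesis using \<sigma> by (simp add: bij_betw_def)
  qed
  have vC: "v ` C' = b2"
  proof -
    have "v ` C' = \<tau> ` C'" unfolding v_def using AC'd by (intro image_cong) auto
    thus ?thesis using \<tau> by (simp add: bij_betw_def)
  qed
  have S1I: "Rw J S1 \<subseteq> Rw J I" and S2I: "Rw J S2 \<subseteq> Rw J I"
    unfolding Rw_def I_def using u12 by blast+
  have vK: "v m \<in> WK" if "m \<in> K" for m
  proof -
    have "m \<in> A \<Longrightarrow> v m \<in> b1" using vA by blast
    moreover have "m \<notin> A \<Longrightarrow> m \<in> C' \<Longrightarrow> v m \<in> b2" using vC by blast
    moreover have "m \<notin> A \<Longrightarrow> m \<notin> C' \<Longrightarrow> v m = 0" using that unfolding v_def by simp
    moreover have "0 \<in> WK" unfolding WK_def by simp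
    moreover have "b1 \<subseteq> WK" using b1(1) S1I RI by blast
    moreover have "b2 \<subseteq> WK" using b2(1) S2I RI by blast
    ultimately show ?thesis by (cases "m \<in> A"; cases "m \<in> C'") auto
  qed
  have vout: "v m = axis m 1" if "m \<notin> K" for m
    using that A(1) C'(1) unfolding v_def C_def by auto
  have rowsM: "rows M = range v" unfolding rows_def row_def Mv by (auto simp: vec_lambda_eta)
  have s1: "Rw J S1 \<subseteq> span (range v)"
    using b1(3) span_mono[of b1 "range v"] vA by blast
  have s2: "Rw J S2 \<subseteq> span (range v)"
    using b2(3) span_mono[of b2 "range v"] vC by blast
  have "Rw J I = Rw J S1 \<union> Rw J S2" unfolding Rw_def I_def using u12 by blast
  hence "Rw J I \<subseteq> span (range v)" using s1 s2 by blast
  hence "span (Rw J I) \<subseteq> span (range v)" by (rule span_minimal) simp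
  hence WKv: "WK \<subseteq> span (range v)" using WKsub by blast
  have ax: "axis k 1 \<in> span (range v)" for k
  proof (cases "k \<in> K")
    case True
    have "axis k (1::real) \<in> WK" unfolding WK_def using True by (auto simp: axis_def)
    thus ?thesis using WKv by blast
  next
    case False thus ?thesis using vout[OF False] by (metis rangeI span_base)
  qed
  have "span (range v) = UNIV"
  proof -
    have "(\<lambda>k. axis k (1::real)) ` UNIV \<subseteq> span (range v)" using ax by blast
    hence "span ((\<lambda>k. axis k (1::real)) ` UNIV) \<subseteq> span (range v)" by (rule span_minimal) simp
    moreover have "x \<in> span ((\<lambda>k. axis k (1::real)) ` UNIV)" for x :: "real^'n"
      by (rule in_span_axis) simp
    ultimately show ?thesis by blast
  qed
  hence "span (rows M) = UNIV" unfolding rowsM .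
  then obtain N' :: "real^'n^'n" where "N' ** M = mat 1" using matrix_left_invertible_span_rows by blast
  hence invM: "invertible M" using invertible_left_inverse by blast
  have bd: "\<forall>i j. M$i$j \<noteq> 0 \<longrightarrow> i = j \<or> (i \<in> K \<and> j \<in> K)"
  proof (intro allI impI)
    fix i j assume h: "M$i$j \<noteq> 0"
    show "i = j \<or> (i \<in> K \<and> j \<in> K)"
    proof (cases "i \<in> K")
      case True
      hence "v i \<in> WK" by (rule vK)
      hence "j \<in> K" using h unfolding Mv WK_def by blast
      thus ?thesis using True by blast
    next
      case False
      hence "M$i$j = axis i 1 $ j" unfolding Mv using vout by simp
      thus ?thesis using h by (auto simp: axis_def split: if_splits)
    qed
  qed
  have neA: "A \<noteq> {}" using A(2) p1 by auto
  have neC: "C \<noteq> {}" using C'(1,2) p2 by auto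
  have ACK: "A \<union> C = K" unfolding C_def using A(1) by blast
  have fin: "\<forall>N. M ** N = mat 1 \<longrightarrow> (\<forall>i\<in>A. \<forall>j\<in>C. \<forall>l. (J ** N)$l$i * (J ** N)$l$j = 0)"
  proof (intro allI impI ballI)
    fix N :: "real^'n^'n" and i j l
    assume MN: "M ** N = mat 1" and i: "i \<in> A" and j: "j \<in> C"
    have vN: "v m v* N = axis m 1" for m
    proof -
      have "v m v* N = (M ** N) $ m" unfolding row_mult Mv ..
      thus ?thesis unfolding MN mat1_row .
    qed
    have row: "(J ** N) $ l = J$l v* N" by (rule row_mult)
    consider "l \<in> S1" | "l \<in> S2" | "l \<notin> I" using u12 unfolding I_def by blast
    thus "(J ** N)$l$i * (J ** N)$l$j = 0"
    proof cases
      case 1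
      hence "J$l \<in> span (v ` A)" using b1(3) vA unfolding Rw_def by blast
      moreover have "j \<notin> A" using j unfolding C_def by blast
      ultimately have "(J ** N)$l$j = 0" unfolding row by (rule span_vmult_zero[OF vN])
      thus ?thesis by simp
    next
      case 2
      hence "J$l \<in> span (v ` C')" using b2(3) vC unfolding Rw_def by blast
      moreover have "i \<notin> C'" using i AC'd by blast
      ultimately have "(J ** N)$l$i = 0" unfolding row by (rule span_vmult_zero[OF vN])
      thus ?thesis by simp
    next
      case 3
      have "J$l \<in> span ((\<lambda>k. axis k 1) ` (- K))"
        by (rule in_span_axis) (use 3 in \<open>auto simp: I_def\<close>)
      moreover have "(\<lambda>k. axis k 1) ` (- K) = v ` (- K)" using vout by (intro image_cong) auto
      ultimately have "J$l \<in> span (v ` (- K))" by simp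
      moreover have "i \<notin> - K" using i A(1) by blast
      ultimately have "(J ** N)$l$i = 0" unfolding row by (rule span_vmult_zero[OF vN])
      thus ?thesis by simp
    qed
  qed
  show ?thesis using invM bd neA neC ACK fin by blast
qed

theorem mainTheorem9:
  fixes f :: "real^'n \<Rightarrow> real^'m" and B :: "'n set set"
  assumes "partition_on UNIV B"
    and "C1_diffeo f"
  shows "(compositional f B \<and> irreducible_gen f B) \<longleftrightarrow>
         (at_most_0_across_slots f B \<and>
          (\<forall>fbar. equivalent_generator B f fbar \<longrightarrow> interaction_asymmetry_0 fbar B))"
proof -
  have diff: "\<forall>z. f differentiable (at z)" and injJ: "\<And>z. inj ((*v) (jac f z))"
    using assms(2) unfolding C1_diffeo_def by auto
  have cov: "\<exists>K\<in>B. m \<in> K" for m using assms(1) unfolding partition_on_def by blast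
  have dsj: "K \<inter> K' = {}" if "K \<in> B" "K' \<in> B" "K \<noteq> K'" for K K'
    using assms(1) that unfolding partition_on_def disjoint_def by blast
  have IsetE: "Iset f z K = {l. \<exists>i\<in>K. jac f z $ l $ i \<noteq> 0}" for z K unfolding Iset_def ..
  have rkE: "rank_rows f z S = dim (Rw (jac f z) S)" for z S
    unfolding rank_rows_dim Rw_def ..
  have rowsupp: "\<forall>l j. (\<exists>i\<in>K. jac f z $l$i \<noteq> 0) \<and> j \<notin> K \<longrightarrow> jac f z $l$j = 0"
    if c: "compositional f B" and K: "K \<in> B" for K z
  proof (intro allI impI)
    fix l j assume h: "(\<exists>i\<in>K. jac f z $l$i \<noteq> 0) \<and> j \<notin> K"
    obtain K' where K': "K' \<in> B" "j \<in> K'" using cov by blast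
    have ne: "K \<noteq> K'" using h K' by blast
    show "jac f z $l$j = 0"
    proof (rule ccontr)
      assume "jac f z $l$j \<noteq> 0"
      hence "l \<in> Iset f z K \<inter> Iset f z K'" unfolding Iset_def using h K' by blast
      moreover have "Iset f z K \<inter> Iset f z K' = {}" using c K K'(1) ne unfolding compositional_def by blast
      ultimately show False by blast
    qed
  qed
  have Mbd: "\<forall>i j. (i \<in> K) \<noteq> (j \<in> K) \<longrightarrow> M$i$j = 0"
    if bdi: "block_diag_invertible B M" and K: "K \<in> B" for M K
  proof (intro allI impI)
    fix i j assume h: "(i \<in> K) \<noteq> (j \<in> K)"
    have "\<not> (\<exists>Bk\<in>B. i \<in> Bk \<and> j \<in> Bk)"
    proof
      assume "\<exists>Bk\<in>B. i \<in> Bk \<and> j \<in> Bk"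
      then obtain Bk where Bk: "Bk \<in> B" "i \<in> Bk" "j \<in> Bk" by blast
      have "Bk = K"
      proof (rule ccontr)
        assume "Bk \<noteq> K"
        hence "Bk \<inter> K = {}" using dsj Bk(1) K by blast
        thus False using h Bk by blast
      qed
      thus False using h Bk by blast
    qed
    thus "M$i$j = 0" using bdi unfolding block_diag_invertible_def by blast
  qed
  show ?thesis
  proof
    assume L: "compositional f B \<and> irreducible_gen f B"
    hence comp: "compositional f B" and irr: "irreducible_gen f B" by auto
    have am: "at_most_0_across_slots f B" using comp comp_iff by blast
    have "interaction_asymmetry_0 fbar B" if eg: "equivalent_generator B f fbar" for fbar
    proof -
      obtain M where bdi: "block_diag_invertible B M" and eq: "\<forall>z. fbar (M *v z) = f z"
        using eg unfolding equivalent_generator_def by blast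
      obtain N where MN: "M ** N = mat 1" and NM: "N ** M = mat 1"
        using bdi unfolding block_diag_invertible_def invertible_def by blast
      have invN: "invertible N" unfolding invertible_def using MN NM by blast
      have fbar_eq: "fbar = (\<lambda>x. f (N *v x))"
      proof
        fix x
        have "M *v (N *v x) = x" by (simp add: matrix_vector_mul_assoc MN)
        hence "fbar x = fbar (M *v (N *v x))" by simp
        thus "fbar x = f (N *v x)" using eq by simp
      qed
      have jacb: "jac fbar w = jac f (N *v w) ** N" for w
        unfolding fbar_eq by (rule jac_comp[OF diff])
      have NBd: "\<forall>i j. (i \<in> K) \<noteq> (j \<in> K) \<longrightarrow> N$i$j = 0" if "K \<in> B" for K
        by (rule bd_inv[OF Mbd[OF bdi that] MN NM])
      have p1: "at_most_0_across_slots fbar B"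
        unfolding at_most_0_across_slots_def at_most_0_interaction_def
      proof (intro ballI impI allI)
        fix Bk Bj w i j l
        assume h: "Bk \<in> B" "Bj \<in> B" "Bk \<noteq> Bj" "i \<in> Bk" "j \<in> Bj"
        define z where "z = N *v w"
        show "jac fbar w $ l $ i * jac fbar w $ l $ j = 0"
        proof (rule ccontr)
          assume "jac fbar w $ l $ i * jac fbar w $ l $ j \<noteq> 0"
          hence a: "(jac f z ** N) $ l $ i \<noteq> 0" "(jac f z ** N) $ l $ j \<noteq> 0"
            unfolding jacb z_def by auto
          have "l \<in> Iset f z Bk"
          proof (rule ccontr)
            assume "l \<notin> Iset f z Bk"
            hence "\<forall>m\<in>Bk. jac f z $ l $ m = 0" unfolding Iset_def by blast
            from prod_zero_out[OF NBd[OF h(1)] this h(4)] a(1) show False by simp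
          qed
          moreover have "l \<in> Iset f z Bj"
          proof (rule ccontr)
            assume "l \<notin> Iset f z Bj"
            hence "\<forall>m\<in>Bj. jac f z $ l $ m = 0" unfolding Iset_def by blast
            from prod_zero_out[OF NBd[OF h(2)] this h(5)] a(2) show False by simp
          qed
          moreover have "Iset f z Bk \<inter> Iset f z Bj = {}"
            using comp h unfolding compositional_def by blast
          ultimately show False by blast
        qed
      qed
      have p2: "first_order_interaction_at fbar A C w"
        if K: "K \<in> B" and ne: "A \<noteq> {}" "C \<noteq> {}" and AC: "A \<union> C = K" for w K A C
      proof -
        define z where "z = N *v w"
        have irrz: "\<forall>S1 S2. S1 \<noteq> {} \<and> S2 \<noteq> {} \<and> S1 \<inter> S2 = {} \<and>
            S1 \<union> S2 = {l. \<exists>i\<in>K. jac f z $ l $ i \<noteq> 0} \<longrightarrow>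
            dim (Rw (jac f z) S1) + dim (Rw (jac f z) S2) > dim (Rw (jac f z) {l. \<exists>i\<in>K. jac f z $ l $ i \<noteq> 0})"
        proof -
          have i0: "\<forall>Bk\<in>B. \<forall>S1 S2. S1 \<noteq> {} \<and> S2 \<noteq> {} \<and> S1 \<inter> S2 = {} \<and> S1 \<union> S2 = Iset f z Bk \<longrightarrow>
              rank_rows f z S1 + rank_rows f z S2 > rank_rows f z (Iset f z Bk)"
            using irr unfolding irreducible_gen_def by (rule spec)
          have i1: "\<forall>S1 S2. S1 \<noteq> {} \<and> S2 \<noteq> {} \<and> S1 \<inter> S2 = {} \<and> S1 \<union> S2 = Iset f z K \<longrightarrow>
              rank_rows f z S1 + rank_rows f z S2 > rank_rows f z (Iset f z K)"
            using i0 K by (rule bspec)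
          show ?thesis using i1 by (simp only: IsetE rkE)
        qed
        have "\<exists>i\<in>A. \<exists>j\<in>C. \<exists>l. (jac f z ** N)$l$i * (jac f z ** N)$l$j \<noteq> 0"
          by (rule dirA[OF injJ invN NBd[OF K] rowsupp[OF comp K] irrz ne AC])
        thus ?thesis unfolding first_order_interaction_at_def jacb z_def .
      qed
      show ?thesis unfolding interaction_asymmetry_0_def using p1 p2 by blast
    qed
    thus "at_most_0_across_slots f B \<and>
          (\<forall>fbar. equivalent_generator B f fbar \<longrightarrow> interaction_asymmetry_0 fbar B)"
      using am by blast
  next
    assume R: "at_most_0_across_slots f B \<and>
          (\<forall>fbar. equivalent_generator B f fbar \<longrightarrow> interaction_asymmetry_0 fbar B)"
    have comp: "compositional f B" using R comp_iff by blast
    have IA: "\<And>fbar. equivalent_generator B f fbar \<Longrightarrow> interaction_asymmetry_0 fbar B" using R by blast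
    have "irreducible_gen f B" unfolding irreducible_gen_def
    proof (intro allI ballI impI)
      fix z K S1 S2
      assume K: "K \<in> B" and S: "S1 \<noteq> {} \<and> S2 \<noteq> {} \<and> S1 \<inter> S2 = {} \<and> S1 \<union> S2 = Iset f z K"
      show "rank_rows f z S1 + rank_rows f z S2 > rank_rows f z (Iset f z K)"
      proof (rule ccontr)
        assume "\<not> ?thesis"
        hence le: "dim (Rw (jac f z) S1) + dim (Rw (jac f z) S2) \<le>
                   dim (Rw (jac f z) {l. \<exists>i\<in>K. jac f z $ l $ i \<noteq> 0})"
          unfolding rkE IsetE by simp
        have u12: "S1 \<union> S2 = {l. \<exists>i\<in>K. jac f z $ l $ i \<noteq> 0}" using S unfolding IsetE by blast
        have S3: "S1 \<noteq> {}" "S2 \<noteq> {}" "S1 \<inter> S2 = {}" using S by auto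
        have ex: "\<exists>M A C. invertible M \<and> (\<forall>i j. M$i$j \<noteq> 0 \<longrightarrow> i = j \<or> (i \<in> K \<and> j \<in> K)) \<and>
           A \<noteq> {} \<and> C \<noteq> {} \<and> A \<union> C = K \<and>
           (\<forall>N. M ** N = mat 1 \<longrightarrow> (\<forall>i\<in>A. \<forall>j\<in>C. \<forall>l. (jac f z ** N)$l$i * (jac f z ** N)$l$j = 0))"
          by (rule dirB[OF injJ rowsupp[OF comp K] S3 u12 le])
        then obtain M where "\<exists>A C. invertible M \<and> (\<forall>i j. M$i$j \<noteq> 0 \<longrightarrow> i = j \<or> (i \<in> K \<and> j \<in> K)) \<and>
           A \<noteq> {} \<and> C \<noteq> {} \<and> A \<union> C = K \<and>
           (\<forall>N. M ** N = mat 1 \<longrightarrow> (\<forall>i\<in>A. \<forall>j\<in>C. \<forall>l. (jac f z ** N)$l$i * (jac f z ** N)$l$j = 0))" ..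
        then obtain A where "\<exists>C. invertible M \<and> (\<forall>i j. M$i$j \<noteq> 0 \<longrightarrow> i = j \<or> (i \<in> K \<and> j \<in> K)) \<and>
           A \<noteq> {} \<and> C \<noteq> {} \<and> A \<union> C = K \<and>
           (\<forall>N. M ** N = mat 1 \<longrightarrow> (\<forall>i\<in>A. \<forall>j\<in>C. \<forall>l. (jac f z ** N)$l$i * (jac f z ** N)$l$j = 0))" ..
        then obtain C where H: "invertible M \<and> (\<forall>i j. M$i$j \<noteq> 0 \<longrightarrow> i = j \<or> (i \<in> K \<and> j \<in> K)) \<and>
           A \<noteq> {} \<and> C \<noteq> {} \<and> A \<union> C = K \<and>
           (\<forall>N. M ** N = mat 1 \<longrightarrow> (\<forall>i\<in>A. \<forall>j\<in>C. \<forall>l. (jac f z ** N)$l$i * (jac f z ** N)$l$j = 0))" ..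
        note H' = H[THEN conjunct2, THEN conjunct2, THEN conjunct2, THEN conjunct2]
        have invM: "invertible M" by (rule conjunct1[OF H])
        have bd: "\<forall>i j. M$i$j \<noteq> 0 \<longrightarrow> i = j \<or> (i \<in> K \<and> j \<in> K)"
          by (rule H[THEN conjunct2, THEN conjunct1])
        have ne: "A \<noteq> {}" "C \<noteq> {}"
          by (rule H[THEN conjunct2, THEN conjunct2, THEN conjunct1],
              rule H[THEN conjunct2, THEN conjunct2, THEN conjunct2, THEN conjunct1])
        have AC: "A \<union> C = K" by (rule conjunct1[OF H'])
        have fin: "\<forall>N. M ** N = mat 1 \<longrightarrow> (\<forall>i\<in>A. \<forall>j\<in>C. \<forall>l. (jac f z ** N)$l$i * (jac f z ** N)$l$j = 0)"
          by (rule conjunct2[OF H'])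
        obtain N where MN: "M ** N = mat 1" and NM: "N ** M = mat 1"
          using invM unfolding invertible_def by blast
        define fbar where "fbar = (\<lambda>x. f (N *v x))"
        have bdi: "block_diag_invertible B M" unfolding block_diag_invertible_def
        proof (intro conjI invM allI impI)
          fix i j assume nb: "\<not> (\<exists>Bk\<in>B. i \<in> Bk \<and> j \<in> Bk)"
          show "M$i$j = 0"
          proof (rule ccontr)
            assume "M$i$j \<noteq> 0"
            hence "i = j \<or> (i \<in> K \<and> j \<in> K)" using bd by blast
            moreover obtain K' where "K' \<in> B" "i \<in> K'" using cov by blast
            ultimately show False using nb K by blast
          qed
        qed
        have "\<forall>z. fbar (M *v z) = f z"
          unfolding fbar_def by (simp add: matrix_vector_mul_assoc NM)
        hence "equivalent_generator B f fbar" unfolding equivalent_generator_def using bdi by blast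
        hence "interaction_asymmetry_0 fbar B" by (rule IA)
        hence "first_order_interaction_at fbar A C (M *v z)"
          unfolding interaction_asymmetry_0_def using K ne AC by blast
        moreover have "jac fbar (M *v z) = jac f z ** N"
          unfolding fbar_def jac_comp[OF diff] by (simp add: matrix_vector_mul_assoc NM)
        ultimately obtain i j l where ijl: "i \<in> A" "j \<in> C"
            "(jac f z ** N)$l$i * (jac f z ** N)$l$j \<noteq> 0"
          unfolding first_order_interaction_at_def by auto
        have "\<forall>i\<in>A. \<forall>j\<in>C. \<forall>l. (jac f z ** N)$l$i * (jac f z ** N)$l$j = 0"
          using fin MN by blast
        thus False using ijl by blast
      qed
    qed
    thus "compositional f B \<and> irreducible_gen f B" using comp by blast
  qed
qed

end
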